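(* Let $X_1,\dots,X_n$ be forests and $A\subset X=X_1\times\cdots\times X_n$. Let $A_1$ be the set of $x\in X$ for which there exist $x^1,\dots,x^n\in A$ with $x_j=x^j_j\ge x^i_j$ for all $1\le i,j\le n$, and let $A_2=\{y\in X: y\le x\text{ for some }x\in A_1\}$. Then $A_2$ contains the c.h-envelope $\widehat A$ of $A$.
   Context: A partially ordered set $Y$ is a forest if for every $y_0\in Y$ the set $\{y\ge y_0\}$ is finite and totally ordered. On $X$, $y\le x$ means $y_i\le x_i$ for all $i$. A subset $B\subset X$ is hereditary if $x\in B$, $y\le x$ imply $y\in B$. Points $x,y$ are $c$-comparable if $x_i,y_i$ are comparable for every $i$, and then $x\vee y=(\max(x_i,y_i))_i$. $B$ is concave if $x\vee y\in B$ whenever $x,y\in B$ are $c$-comparable. The c.h-envelope $\widehat A$ is the smallest concave hereditary subset of $X$ containing $A$. *)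

theory Defs
  imports Main
begin

definition forest_on :: "'a set \<Rightarrow> ('a \<Rightarrow> 'a \<Rightarrow> bool) \<Rightarrow> bool" where
  "forest_on S le \<longleftrightarrow>
     (\<forall>x\<in>S. le x x) \<and>
     (\<forall>x\<in>S. \<forall>y\<in>S. le x y \<and> le y x \<longrightarrow> x = y) \<and>
     (\<forall>x\<in>S. \<forall>y\<in>S. \<forall>z\<in>S. le x y \<and> le y z \<longrightarrow> le x z) \<and>
     (\<forall>y0\<in>S. finite {y\<in>S. le y0 y} \<and>
        (\<forall>y\<in>{y\<in>S. le y0 y}. \<forall>z\<in>{y\<in>S. le y0 y}. le y z \<or> le z y))"

definition prodX :: "('i \<Rightarrow> 'a set) \<Rightarrow> ('i \<Rightarrow> 'a) set" where
  "prodX X = {x. \<forall>i. x i \<in> X i}"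

definition prod_le :: "('i \<Rightarrow> 'a \<Rightarrow> 'a \<Rightarrow> bool) \<Rightarrow> ('i \<Rightarrow> 'a) \<Rightarrow> ('i \<Rightarrow> 'a) \<Rightarrow> bool" where
  "prod_le le y x \<longleftrightarrow> (\<forall>i. le i (y i) (x i))"

definition hereditary :: "('i \<Rightarrow> 'a set) \<Rightarrow> ('i \<Rightarrow> 'a \<Rightarrow> 'a \<Rightarrow> bool) \<Rightarrow> ('i \<Rightarrow> 'a) set \<Rightarrow> bool" where
  "hereditary X le B \<longleftrightarrow> (\<forall>x\<in>B. \<forall>y\<in>prodX X. prod_le le y x \<longrightarrow> y \<in> B)"

definition c_comparable :: "('i \<Rightarrow> 'a \<Rightarrow> 'a \<Rightarrow> bool) \<Rightarrow> ('i \<Rightarrow> 'a) \<Rightarrow> ('i \<Rightarrow> 'a) \<Rightarrow> bool" where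
  "c_comparable le x y \<longleftrightarrow> (\<forall>i. le i (x i) (y i) \<or> le i (y i) (x i))"

text \<open>Coordinatewise maximum (meaningful for c-comparable points).\<close>
definition cjoin :: "('i \<Rightarrow> 'a \<Rightarrow> 'a \<Rightarrow> bool) \<Rightarrow> ('i \<Rightarrow> 'a) \<Rightarrow> ('i \<Rightarrow> 'a) \<Rightarrow> ('i \<Rightarrow> 'a)" where
  "cjoin le x y = (\<lambda>i. if le i (x i) (y i) then y i else x i)"

definition concave :: "('i \<Rightarrow> 'a \<Rightarrow> 'a \<Rightarrow> bool) \<Rightarrow> ('i \<Rightarrow> 'a) set \<Rightarrow> bool" where
  "concave le B \<longleftrightarrow> (\<forall>x\<in>B. \<forall>y\<in>B. c_comparable le x y \<longrightarrow> cjoin le x y \<in> B)"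

definition ch_envelope :: "('i \<Rightarrow> 'a set) \<Rightarrow> ('i \<Rightarrow> 'a \<Rightarrow> 'a \<Rightarrow> bool) \<Rightarrow> ('i \<Rightarrow> 'a) set \<Rightarrow> ('i \<Rightarrow> 'a) set" where
  "ch_envelope X le A =
     \<Inter>{B. B \<subseteq> prodX X \<and> A \<subseteq> B \<and> hereditary X le B \<and> concave le B}"

definition setA1 :: "('i \<Rightarrow> 'a set) \<Rightarrow> ('i \<Rightarrow> 'a \<Rightarrow> 'a \<Rightarrow> bool) \<Rightarrow> ('i \<Rightarrow> 'a) set \<Rightarrow> ('i \<Rightarrow> 'a) set" where
  "setA1 X le A = {x \<in> prodX X. \<exists>xs :: 'i \<Rightarrow> ('i \<Rightarrow> 'a).
                    (\<forall>i. xs i \<in> A) \<and>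
                    (\<forall>i j. x j = xs j j \<and> le j (xs i j) (xs j j))}"

definition setA2 :: "('i \<Rightarrow> 'a set) \<Rightarrow> ('i \<Rightarrow> 'a \<Rightarrow> 'a \<Rightarrow> bool) \<Rightarrow> ('i \<Rightarrow> 'a) set \<Rightarrow> ('i \<Rightarrow> 'a) set" where
  "setA2 X le A = {y \<in> prodX X. \<exists>x\<in>setA1 X le A. prod_le le y x}"

end

theory Submission
  imports Defs
begin

lemma f_refl: "forest_on S le \<Longrightarrow> u \<in> S \<Longrightarrow> le u u"
  unfolding forest_on_def by blast
lemma f_trans: "forest_on S le \<Longrightarrow> u \<in> S \<Longrightarrow> v \<in> S \<Longrightarrow> w \<in> S \<Longrightarrow> le u v \<Longrightarrow> le v w \<Longrightarrow> le u w"
  unfolding forest_on_def by blast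
lemma f_chain: "forest_on S le \<Longrightarrow> u \<in> S \<Longrightarrow> v \<in> S \<Longrightarrow> w \<in> S \<Longrightarrow> le u v \<Longrightarrow> le u w \<Longrightarrow> le v w \<or> le w v"
  unfolding forest_on_def by blast

lemma A2_concave:
  fixes X :: "'i \<Rightarrow> 'a set" and le :: "'i \<Rightarrow> 'a \<Rightarrow> 'a \<Rightarrow> bool"
  assumes forests: "\<forall>i. forest_on (X i) (le i)" and A_sub: "A \<subseteq> prodX X"
  shows "concave le (setA2 X le A)"
  unfolding concave_def
proof (intro ballI impI)
  fix x y assume xA: "x \<in> setA2 X le A" and yA: "y \<in> setA2 X le A"
    and cc: "c_comparable le x y"
  from xA obtain a where xX: "x \<in> prodX X" and a1: "a \<in> setA1 X le A" and xa: "prod_le le x a"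
    unfolding setA2_def by blast
  from yA obtain b where yX: "y \<in> prodX X" and b1: "b \<in> setA1 X le A" and yb: "prod_le le y b"
    unfolding setA2_def by blast
  from a1 obtain as where aX: "a \<in> prodX X" and as: "\<forall>i. as i \<in> A"
    "\<forall>i j. a j = as j j \<and> le j (as i j) (as j j)" unfolding setA1_def by blast
  from b1 obtain bs where bX: "b \<in> prodX X" and bs: "\<forall>i. bs i \<in> A"
    "\<forall>i j. b j = bs j j \<and> le j (bs i j) (bs j j)" unfolding setA1_def by blast
  have F: "forest_on (X j) (le j)" for j using forests by blast
  have xj: "x j \<in> X j" "y j \<in> X j" "a j \<in> X j" "b j \<in> X j" for j
    using xX yX aX bX unfolding prodX_def by auto
  have xaj: "le j (x j) (a j)" and ybj: "le j (y j) (b j)" for j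
    using xa yb unfolding prod_le_def by auto
  have comp: "le j (a j) (b j) \<or> le j (b j) (a j)" for j
  proof -
    from cc have "le j (x j) (y j) \<or> le j (y j) (x j)" unfolding c_comparable_def by blast
    then show ?thesis
    proof
      assume "le j (x j) (y j)"
      then have "le j (x j) (b j)" using f_trans[OF F xj(1) xj(2) xj(4)] ybj by blast
      then show ?thesis using f_chain[OF F xj(1) xj(3) xj(4)] xaj by blast
    next
      assume "le j (y j) (x j)"
      then have "le j (y j) (a j)" using f_trans[OF F xj(2) xj(1) xj(3)] xaj by blast
      then show ?thesis using f_chain[OF F xj(2) xj(4) xj(3)] ybj by blast
    qed
  qed
  define cs where "cs = (\<lambda>j. if le j (b j) (a j) then as j else bs j)"
  define c where "c = (\<lambda>j. cs j j)"
  have cj: "c j = (if le j (b j) (a j) then a j else b j)" for j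
    unfolding c_def cs_def using as(2) bs(2) by auto
  have cX: "c \<in> prodX X" using xj unfolding prodX_def cj by auto
  have ac: "le j (a j) (c j)" and bc: "le j (b j) (c j)" for j
  proof -
    have "le j (a j) (c j) \<and> le j (b j) (c j)"
    proof (cases "le j (b j) (a j)")
      case True then show ?thesis using cj f_refl[OF F xj(3)] by simp
    next
      case False then have "le j (a j) (b j)" using comp by blast
      then show ?thesis using False cj f_refl[OF F xj(4)] by simp
    qed
    then show "le j (a j) (c j)" "le j (b j) (c j)" by auto
  qed
  have cjX: "c j \<in> X j" for j using cX unfolding prodX_def by blast
  have cA1: "c \<in> setA1 X le A"
    unfolding setA1_def
  proof (intro CollectI conjI cX exI[of _ cs] allI)
    show "cs i \<in> A" for i using as bs unfolding cs_def by auto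
    show "c j = cs j j" for j unfolding c_def by simp
    show "le j (cs i j) (cs j j)" for i j
    proof -
      have m: "as i j \<in> X j" "bs i j \<in> X j" using as(1) bs(1) A_sub unfolding prodX_def by auto
      have "le j (cs i j) (c j)"
      proof (cases "le i (b i) (a i)")
        case True
        then have "cs i j = as i j" unfolding cs_def by simp
        then show ?thesis using f_trans[OF F m(1) xj(3) cjX] as(2) ac by simp
      next
        case False
        then have "cs i j = bs i j" unfolding cs_def by simp
        then show ?thesis using f_trans[OF F m(2) xj(4) cjX] bs(2) bc by simp
      qed
      then show ?thesis unfolding c_def .
    qed
  qed
  have zX: "cjoin le x y \<in> prodX X" using xX yX unfolding cjoin_def prodX_def by auto
  have zc: "prod_le le (cjoin le x y) c"
    unfolding prod_le_def
  proof
    fix j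
    show "le j (cjoin le x y j) (c j)"
    proof (cases "le j (x j) (y j)")
      case True
      then have "cjoin le x y j = y j" unfolding cjoin_def by simp
      then show ?thesis using f_trans[OF F xj(2) xj(4) cjX] ybj bc by simp
    next
      case False
      then have "cjoin le x y j = x j" unfolding cjoin_def by simp
      then show ?thesis using f_trans[OF F xj(1) xj(3) cjX] xaj ac by simp
    qed
  qed
  show "cjoin le x y \<in> setA2 X le A" unfolding setA2_def using zX cA1 zc by blast
qed

theorem mainTheorem5:
  fixes X :: "'i::finite \<Rightarrow> 'a set"
    and le :: "'i \<Rightarrow> 'a \<Rightarrow> 'a \<Rightarrow> bool"
    and A :: "('i \<Rightarrow> 'a) set"
  assumes forests: "\<forall>i. forest_on (X i) (le i)"
    and A_sub: "A \<subseteq> prodX X"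
  shows "ch_envelope X le A \<subseteq> setA2 X le A"
proof -
  have F: "forest_on (X j) (le j)" for j using forests by blast
  have sub: "setA2 X le A \<subseteq> prodX X" unfolding setA2_def by blast
  have AA: "A \<subseteq> setA2 X le A"
  proof
    fix x assume x: "x \<in> A"
    then have xX: "x \<in> prodX X" using A_sub by blast
    then have r: "le j (x j) (x j)" for j using f_refl[OF F] unfolding prodX_def by blast
    then have px: "prod_le le x x" unfolding prod_le_def by blast
    have "\<forall>i. (\<lambda>_. x) i \<in> A" using x by simp
    moreover have "\<forall>i j. x j = (\<lambda>_. x) j j \<and> le j ((\<lambda>_. x) i j) ((\<lambda>_. x) j j)" using r by simp
    ultimately have "x \<in> setA1 X le A" unfolding setA1_def using xX by (intro CollectI conjI exI[of _ "\<lambda>_. x"]) auto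
    then show "x \<in> setA2 X le A" unfolding setA2_def using xX px by blast
  qed
  have her: "hereditary X le (setA2 X le A)"
    unfolding hereditary_def
  proof (intro ballI impI)
    fix x y assume x: "x \<in> setA2 X le A" and y: "y \<in> prodX X"
      and yx: "prod_le le y x"
    from x obtain a where a: "a \<in> setA1 X le A" "prod_le le x a" and xX: "x \<in> prodX X"
      unfolding setA2_def by blast
    have aX: "a \<in> prodX X" using a unfolding setA1_def by blast
    have "prod_le le y a" unfolding prod_le_def
    proof
      fix j
      have m: "y j \<in> X j" "x j \<in> X j" "a j \<in> X j" using y xX aX unfolding prodX_def by auto
      show "le j (y j) (a j)" using f_trans[OF F m] yx a(2) unfolding prod_le_def by blast
    qed
    then show "y \<in> setA2 X le A" using a y unfolding setA2_def by blast
  qed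
  have "concave le (setA2 X le A)" using A2_concave[OF forests A_sub] .
  then show ?thesis unfolding ch_envelope_def using sub AA her by blast
qed

end
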